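(* Let $E$ be an arbitrary directed graph satisfying Condition (L), and let $(H,S)$ be a reflexive admissible pair of $E$. Then the quotient graph $E/(H,S)$ satisfies Condition (L).
   Context: A path is a vertex or a finite sequence of edges $e_1\dots e_n$ with $\mathbf{r}(e_i)=\mathbf{s}(e_{i+1})$; $p^0$ is its vertex set. A cycle is a closed path ($\mathbf{s}(p)=\mathbf{r}(p)$) of positive length whose edges have distinct sources; it has an exit if some vertex of it emits an edge not on the cycle. Condition (L): every cycle has an exit. Write $u\ge v$ if there is a path from $u$ to $v$; $R(V)=\{u\mid u\ge v$ for some $v\in V\}$. $H\subseteq E^0$ is hereditary if closed under following paths, saturated if every vertex emitting a nonzero finite number of edges all with ranges in $H$ lies in $H$. $B_H=\{v\in E^0-H\mid v$ emits infinitely many edges and $\mathbf{s}^{-1}(v)\cap\mathbf{r}^{-1}(E^0-H)$ is nonempty and finite$\}$. Admissible pair: $(H,S)$, $H$ hereditary saturated, $S\subseteq B_H$. $H^\bot=E^0-R(H)$, $S^\bot=B_{H^\bot}-S$, $H^{\bot\bot}=E^0-R(H^\bot)$, $S^{\bot\bot}=B_{H^{\bot\bot}}-S^\bot$; $(H,S)$ is reflexive if $(H,S)=(H^{\bot\bot},S^{\bot\bot})$. The quotient graph $E/(H,S)$ has vertices $(E^0-H)\cup\{v'\mid v\in B_H-S\}$ and edges $\{e\in E^1\mid\mathbf{r}(e)\notin H\}\cup\{e'\mid e\in E^1,\ \mathbf{r}(e)\in B_H-S\}$, with $\mathbf{s},\mathbf{r}$ as in $E$ on edges of $E$, and $\mathbf{s}(e')=\mathbf{s}(e)$,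 $\mathbf{r}(e')=\mathbf{r}(e)'$. *)

theory Defs
  imports Main
begin

definition graph :: "'v set \<Rightarrow> 'e set \<Rightarrow> ('e \<Rightarrow> 'v) \<Rightarrow> ('e \<Rightarrow> 'v) \<Rightarrow> bool" where
  "graph V Ed s r \<longleftrightarrow> (\<forall>e\<in>Ed. s e \<in> V \<and> r e \<in> V)"

definition epath :: "'e set \<Rightarrow> ('e \<Rightarrow> 'v) \<Rightarrow> ('e \<Rightarrow> 'v) \<Rightarrow> 'e list \<Rightarrow> bool" where
  "epath Ed s r p \<longleftrightarrow> p \<noteq> [] \<and> set p \<subseteq> Ed \<and>
     (\<forall>i. Suc i < length p \<longrightarrow> r (p ! i) = s (p ! Suc i))"

definition cycle :: "'e set \<Rightarrow> ('e \<Rightarrow> 'v) \<Rightarrow> ('e \<Rightarrow> 'v) \<Rightarrow> 'e list \<Rightarrow> bool" where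
  "cycle Ed s r p \<longleftrightarrow> epath Ed s r p \<and> s (hd p) = r (last p) \<and> distinct (map s p)"

definition pverts :: "('e \<Rightarrow> 'v) \<Rightarrow> ('e \<Rightarrow> 'v) \<Rightarrow> 'e list \<Rightarrow> 'v set" where
  "pverts s r p = s ` set p \<union> r ` set p"

definition has_exit :: "'e set \<Rightarrow> ('e \<Rightarrow> 'v) \<Rightarrow> ('e \<Rightarrow> 'v) \<Rightarrow> 'e list \<Rightarrow> bool" where
  "has_exit Ed s r p \<longleftrightarrow> (\<exists>v\<in>pverts s r p. \<exists>f\<in>Ed. s f = v \<and> f \<notin> set p)"

definition condition_L :: "'v set \<Rightarrow> 'e set \<Rightarrow> ('e \<Rightarrow> 'v) \<Rightarrow> ('e \<Rightarrow> 'v) \<Rightarrow> bool" where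
  "condition_L V Ed s r \<longleftrightarrow> (\<forall>p. cycle Ed s r p \<longrightarrow> has_exit Ed s r p)"

definition geq :: "'v set \<Rightarrow> 'e set \<Rightarrow> ('e \<Rightarrow> 'v) \<Rightarrow> ('e \<Rightarrow> 'v) \<Rightarrow> 'v \<Rightarrow> 'v \<Rightarrow> bool" where
  "geq V Ed s r u v \<longleftrightarrow> (u = v \<and> u \<in> V) \<or>
     (\<exists>p. epath Ed s r p \<and> s (hd p) = u \<and> r (last p) = v)"

definition Rset :: "'v set \<Rightarrow> 'e set \<Rightarrow> ('e \<Rightarrow> 'v) \<Rightarrow> ('e \<Rightarrow> 'v) \<Rightarrow> 'v set \<Rightarrow> 'v set" where
  "Rset V Ed s r W = {u \<in> V. \<exists>w\<in>W. geq V Ed s r u w}"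

definition hereditary :: "'v set \<Rightarrow> 'e set \<Rightarrow> ('e \<Rightarrow> 'v) \<Rightarrow> ('e \<Rightarrow> 'v) \<Rightarrow> 'v set \<Rightarrow> bool" where
  "hereditary V Ed s r H \<longleftrightarrow> H \<subseteq> V \<and> (\<forall>u\<in>H. \<forall>w. geq V Ed s r u w \<longrightarrow> w \<in> H)"

definition emits :: "'e set \<Rightarrow> ('e \<Rightarrow> 'v) \<Rightarrow> 'v \<Rightarrow> 'e set" where
  "emits Ed s v = {e \<in> Ed. s e = v}"

definition saturated :: "'v set \<Rightarrow> 'e set \<Rightarrow> ('e \<Rightarrow> 'v) \<Rightarrow> ('e \<Rightarrow> 'v) \<Rightarrow> 'v set \<Rightarrow> bool" where
  "saturated V Ed s r H \<longleftrightarrow> (\<forall>v\<in>V. finite (emits Ed s v) \<and> emits Ed s v \<noteq> {} \<and>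
      r ` emits Ed s v \<subseteq> H \<longrightarrow> v \<in> H)"

definition breaking :: "'v set \<Rightarrow> 'e set \<Rightarrow> ('e \<Rightarrow> 'v) \<Rightarrow> ('e \<Rightarrow> 'v) \<Rightarrow> 'v set \<Rightarrow> 'v set" where
  "breaking V Ed s r H = {v \<in> V - H. infinite (emits Ed s v) \<and>
      {e \<in> emits Ed s v. r e \<in> V - H} \<noteq> {} \<and> finite {e \<in> emits Ed s v. r e \<in> V - H}}"

definition admissible :: "'v set \<Rightarrow> 'e set \<Rightarrow> ('e \<Rightarrow> 'v) \<Rightarrow> ('e \<Rightarrow> 'v) \<Rightarrow> 'v set \<Rightarrow> 'v set \<Rightarrow> bool" where
  "admissible V Ed s r H S \<longleftrightarrow> hereditary V Ed s r H \<and> saturated V Ed s r H \<and>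
      S \<subseteq> breaking V Ed s r H"

definition Hperp :: "'v set \<Rightarrow> 'e set \<Rightarrow> ('e \<Rightarrow> 'v) \<Rightarrow> ('e \<Rightarrow> 'v) \<Rightarrow> 'v set \<Rightarrow> 'v set" where
  "Hperp V Ed s r H = V - Rset V Ed s r H"

definition reflexive_pair :: "'v set \<Rightarrow> 'e set \<Rightarrow> ('e \<Rightarrow> 'v) \<Rightarrow> ('e \<Rightarrow> 'v) \<Rightarrow> 'v set \<Rightarrow> 'v set \<Rightarrow> bool" where
  "reflexive_pair V Ed s r H S \<longleftrightarrow>
     (let H1 = Hperp V Ed s r H; S1 = breaking V Ed s r H1 - S;
          H2 = Hperp V Ed s r H1; S2 = breaking V Ed s r H2 - S1
      in H = H2 \<and> S = S2)"

text \<open>Quotient graph E/(H,S): vertex v is Inl v, v' is Inr v; edge e is Inl e, e' is Inr e.\<close>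
definition quot_V :: "'v set \<Rightarrow> 'e set \<Rightarrow> ('e \<Rightarrow> 'v) \<Rightarrow> ('e \<Rightarrow> 'v) \<Rightarrow> 'v set \<Rightarrow> 'v set \<Rightarrow> ('v + 'v) set" where
  "quot_V V Ed s r H S = Inl ` (V - H) \<union> Inr ` (breaking V Ed s r H - S)"

definition quot_E :: "'v set \<Rightarrow> 'e set \<Rightarrow> ('e \<Rightarrow> 'v) \<Rightarrow> ('e \<Rightarrow> 'v) \<Rightarrow> 'v set \<Rightarrow> 'v set \<Rightarrow> ('e + 'e) set" where
  "quot_E V Ed s r H S = Inl ` {e \<in> Ed. r e \<notin> H} \<union> Inr ` {e \<in> Ed. r e \<in> breaking V Ed s r H - S}"

definition quot_s :: "('e \<Rightarrow> 'v) \<Rightarrow> ('e + 'e) \<Rightarrow> ('v + 'v)" where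
  "quot_s s x = (case x of Inl e \<Rightarrow> Inl (s e) | Inr e \<Rightarrow> Inl (s e))"

definition quot_r :: "('e \<Rightarrow> 'v) \<Rightarrow> ('e + 'e) \<Rightarrow> ('v + 'v)" where
  "quot_r r x = (case x of Inl e \<Rightarrow> Inl (r e) | Inr e \<Rightarrow> Inr (r e))"

end

theory Submission imports Defs begin

definition erel :: "'e set \<Rightarrow> ('e \<Rightarrow> 'v) \<Rightarrow> ('e \<Rightarrow> 'v) \<Rightarrow> ('v \<times> 'v) set" where
  "erel Ed s r = {(s e, r e) | e. e \<in> Ed}"

lemma erelI: "e \<in> Ed \<Longrightarrow> (s e, r e) \<in> erel Ed s r"
  unfolding erel_def by blast

lemma epath_rel:
  assumes "epath Ed s r p" shows "(s (hd p), r (last p)) \<in> (erel Ed s r)\<^sup>+"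
  using assms
proof (induction p)
  case Nil thus ?case by (simp add: epath_def)
next
  case (Cons a q)
  have aE: "a \<in> Ed" using Cons.prems by (simp add: epath_def)
  show ?case
  proof (cases "q = []")
    case True thus ?thesis using aE by (auto intro: erelI)
  next
    case False
    have "epath Ed s r q" using Cons.prems False unfolding epath_def
    proof (intro conjI allI impI)
      fix i assume "(a # q \<noteq> [] \<and> set (a # q) \<subseteq> Ed \<and> (\<forall>i. Suc i < length (a # q) \<longrightarrow> r ((a # q) ! i) = s ((a # q) ! Suc i)))"
        and "Suc i < length q"
      thus "r (q ! i) = s (q ! Suc i)" by (metis Suc_less_eq length_Cons nth_Cons_Suc)
    qed auto
    hence IH: "(s (hd q), r (last q)) \<in> (erel Ed s r)\<^sup>+" using Cons.IH by blast
    have "r a = s (hd q)" using Cons.prems False unfolding epath_def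
      by (metis hd_conv_nth length_Cons length_greater_0_conv less_Suc_eq_0_disj nth_Cons_0 nth_Cons_Suc)
    hence "(s a, s (hd q)) \<in> erel Ed s r" using aE by (metis erelI)
    thus ?thesis using IH False by simp
  qed
qed

lemma epath_Cons:
  assumes "epath Ed s r q" "e \<in> Ed" "r e = s (hd q)" shows "epath Ed s r (e # q)"
  using assms unfolding epath_def
  apply (auto simp: nth_Cons split: nat.splits)
  by (metis hd_conv_nth)

lemma rel_geq:
  assumes g: "graph V Ed s r" and "(u, v) \<in> (erel Ed s r)\<^sup>*" and "u \<in> V"
  shows "geq V Ed s r u v"
  using assms(2,3)
proof (induction rule: converse_rtrancl_induct)
  case base thus ?case by (simp add: geq_def)
next
  case (step y z)
  then obtain e where e: "e \<in> Ed" "y = s e" "z = r e" unfolding erel_def by blast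
  have "z \<in> V" using g e unfolding graph_def by auto
  hence "geq V Ed s r z v" using step by blast
  thus ?case unfolding geq_def
  proof (elim disjE conjE exE)
    assume "z = v" thus "y = v \<and> y \<in> V \<or> (\<exists>p. epath Ed s r p \<and> s (hd p) = y \<and> r (last p) = v)"
      using e by (intro disjI2 exI[of _ "[e]"]) (auto simp: epath_def)
  next
    fix p assume "epath Ed s r p" "s (hd p) = z" "r (last p) = v"
    thus "y = v \<and> y \<in> V \<or> (\<exists>p. epath Ed s r p \<and> s (hd p) = y \<and> r (last p) = v)"
      using e epath_Cons[of Ed s r p e] by (intro disjI2 exI[of _ "e # p"]) (auto simp: epath_def)
  qed
qed

lemma geq_rel:
  assumes g: "graph V Ed s r" and "geq V Ed s r u v"
  shows "u \<in> V \<and> (u, v) \<in> (erel Ed s r)\<^sup>*"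
  using assms(2) unfolding geq_def
proof (elim disjE conjE exE)
  fix p assume p: "epath Ed s r p" "s (hd p) = u" "r (last p) = v"
  have "hd p \<in> Ed" using p(1) unfolding epath_def by auto
  hence "u \<in> V" using g p(2) unfolding graph_def by auto
  thus ?thesis using epath_rel[OF p(1)] p by auto
qed auto

lemma epath_take: "epath Ed s r p \<Longrightarrow> j < length p \<Longrightarrow> epath Ed s r (take (Suc j) p)"
  unfolding epath_def by (auto dest: in_set_takeD)

lemma epath_drop: "epath Ed s r p \<Longrightarrow> j < length p \<Longrightarrow> epath Ed s r (drop j p)"
  unfolding epath_def by (auto dest: in_set_dropD)

lemma last_take_Suc: "k < length p \<Longrightarrow> last (take (Suc k) p) = p ! k"
proof -
  assume k: "k < length p"
  hence "take (Suc k) p \<noteq> []" by (cases p) auto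
  hence "last (take (Suc k) p) = take (Suc k) p ! (length (take (Suc k) p) - 1)" by (rule last_conv_nth)
  also have "\<dots> = p ! k" using k by simp
  finally show ?thesis .
qed

lemma cyc_s:
  assumes p: "epath Ed s r p" and j: "j < length p"
  shows "(s (p ! j), r (last p)) \<in> (erel Ed s r)\<^sup>* \<and> (s (hd p), s (p ! j)) \<in> (erel Ed s r)\<^sup>*"
proof
  have "(s (hd (drop j p)), r (last (drop j p))) \<in> (erel Ed s r)\<^sup>+"
    by (rule epath_rel[OF epath_drop[OF p j]])
  thus "(s (p ! j), r (last p)) \<in> (erel Ed s r)\<^sup>*" using j
    by (simp add: hd_drop_conv_nth)
next
  show "(s (hd p), s (p ! j)) \<in> (erel Ed s r)\<^sup>*"
  proof (cases j)
    case 0 thus ?thesis using p by (simp add: epath_def hd_conv_nth)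
  next
    case (Suc k)
    have "(s (hd (take (Suc k) p)), r (last (take (Suc k) p))) \<in> (erel Ed s r)\<^sup>+"
      using epath_rel[OF epath_take[OF p, of k]] j Suc by simp
    moreover have "r (p ! k) = s (p ! j)" using p j Suc unfolding epath_def by auto
    ultimately show ?thesis using j Suc p
      by (simp add: last_take_Suc hd_conv_nth epath_def)
  qed
qed

lemma cyc_r:
  assumes p: "epath Ed s r p" and j: "j < length p"
  shows "(r (p ! j), r (last p)) \<in> (erel Ed s r)\<^sup>* \<and> (s (hd p), r (p ! j)) \<in> (erel Ed s r)\<^sup>*"
proof
  show "(r (p ! j), r (last p)) \<in> (erel Ed s r)\<^sup>*"
  proof (cases "Suc j < length p")
    case True
    hence "r (p ! j) = s (p ! Suc j)" using p unfolding epath_def by auto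
    thus ?thesis using cyc_s[OF p True] by simp
  next
    case False
    hence "p ! j = last p" using j by (subst last_conv_nth) (auto intro: arg_cong[where f="(!) p"])
    thus ?thesis by simp
  qed
next
  have "(s (hd (take (Suc j) p)), r (last (take (Suc j) p))) \<in> (erel Ed s r)\<^sup>+"
    using epath_rel[OF epath_take[OF p j]] .
  thus "(s (hd p), r (p ! j)) \<in> (erel Ed s r)\<^sup>*" using j p
    by (simp add: last_take_Suc hd_conv_nth epath_def)
qed

lemma cyc_conn:
  assumes p: "epath Ed s r p" and c: "s (hd p) = r (last p)"
    and x: "x \<in> pverts s r p" and y: "y \<in> pverts s r p"
  shows "(x, y) \<in> (erel Ed s r)\<^sup>*"
proof -
  have A: "(z, r (last p)) \<in> (erel Ed s r)\<^sup>* \<and> (s (hd p), z) \<in> (erel Ed s r)\<^sup>*"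
    if "z \<in> pverts s r p" for z
    using that cyc_s[OF p] cyc_r[OF p] unfolding pverts_def
    by (auto simp: in_set_conv_nth)
  show ?thesis using A[OF x] A[OF y] c by (metis rtrancl_trans)
qed

lemma exit_outside_H:
  assumes g: "graph V Ed s r" and her: "hereditary V Ed s r H"
    and rf: "H = Hperp V Ed s r (Hperp V Ed s r H)"
    and cyc: "cycle Ed s r p" and notH: "\<forall>e\<in>set p. r e \<notin> H"
    and f: "f \<in> Ed" "s f \<in> pverts s r p" "f \<notin> set p"
  shows "\<exists>g\<in>Ed. s g \<in> pverts s r p \<and> g \<notin> set p \<and> r g \<notin> H"
proof (rule ccontr)
  assume N: "\<not> ?thesis"
  have p: "epath Ed s r p" and c: "s (hd p) = r (last p)" using cyc unfolding cycle_def by auto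
  have pne: "p \<noteq> []" using p unfolding epath_def by auto
  have rfH: "r f \<in> H" using N f by blast
  define v where "v = s f"
  have vV: "v \<in> V" using g f unfolding graph_def v_def by auto
  have hdV: "r (hd p) \<in> pverts s r p" using pne unfolding pverts_def by auto
  have vnH: "v \<notin> H"
  proof
    assume "v \<in> H"
    moreover have "geq V Ed s r v (r (hd p))"
      using rel_geq[OF g cyc_conn[OF p c f(2) hdV] ] vV v_def by simp
    ultimately have "r (hd p) \<in> H" using her unfolding hereditary_def by blast
    thus False using notH pne by simp
  qed
  hence "v \<in> Rset V Ed s r (Hperp V Ed s r H)" using vV rf unfolding Hperp_def by blast
  then obtain w where w: "w \<in> Hperp V Ed s r H" "geq V Ed s r v w" unfolding Rset_def by blast
  have wV: "w \<in> V" and wR: "w \<notin> Rset V Ed s r H" using w(1) unfolding Hperp_def by auto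
  have vw: "(v, w) \<in> (erel Ed s r)\<^sup>*" using geq_rel[OF g w(2)] by blast
  have claim: "x \<in> pverts s r p \<union> H" if "(v, x) \<in> (erel Ed s r)\<^sup>*" for x
    using that
  proof (induction rule: rtrancl_induct)
    case base thus ?case using f v_def by auto
  next
    case (step y z)
    then obtain e where e: "e \<in> Ed" "y = s e" "z = r e" unfolding erel_def by blast
    show ?case
    proof (cases "y \<in> H")
      case True
      have "y \<in> V" using True her unfolding hereditary_def by blast
      hence "geq V Ed s r y z" using rel_geq[OF g] step(2) by blast
      thus ?thesis using True her unfolding hereditary_def by blast
    next
      case False
      hence yp: "y \<in> pverts s r p" using step by blast
      show ?thesis
      proof (cases "e \<in> set p")
        case True thus ?thesis using e unfolding pverts_def by blast
      next
        case False thus ?thesis using N e yp by blast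
      qed
    qed
  qed
  have "w \<in> pverts s r p \<union> H" using claim[OF vw] .
  thus False
  proof
    assume "w \<in> H"
    hence "geq V Ed s r w w" using wV unfolding geq_def by blast
    thus False using wR \<open>w \<in> H\<close> wV unfolding Rset_def by blast
  next
    assume wp: "w \<in> pverts s r p"
    have "(w, s f) \<in> (erel Ed s r)\<^sup>*" using cyc_conn[OF p c wp f(2)] .
    moreover have "(s f, r f) \<in> erel Ed s r" using f(1) by (rule erelI)
    ultimately have "(w, r f) \<in> (erel Ed s r)\<^sup>*" by simp
    hence "geq V Ed s r w (r f)" using rel_geq[OF g] wV by blast
    thus False using wR rfH wV unfolding Rset_def by blast
  qed
qed

lemma qs_Inl[simp]: "quot_s s (Inl e) = Inl (s e)" and qs_Inr[simp]: "quot_s s (Inr e) = Inl (s e)"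
  and qr_Inl[simp]: "quot_r r (Inl e) = Inl (r e)" and qr_Inr[simp]: "quot_r r (Inr e) = Inr (r e)"
  by (simp_all add: quot_s_def quot_r_def)

lemma qs_Inl_ex: "\<exists>u. quot_s s x = Inl u"
  by (cases x) auto

theorem proposition3p11:
  fixes V :: "'v set" and Ed :: "'e set" and s r :: "'e \<Rightarrow> 'v" and H S :: "'v set"
  assumes "graph V Ed s r"
    and "condition_L V Ed s r"
    and "admissible V Ed s r H S"
    and "reflexive_pair V Ed s r H S"
  shows "condition_L (quot_V V Ed s r H S) (quot_E V Ed s r H S) (quot_s s) (quot_r r)"
  unfolding condition_L_def
proof (intro allI impI)
  fix P assume cq: "cycle (quot_E V Ed s r H S) (quot_s s) (quot_r r) P"
  have her: "hereditary V Ed s r H" using assms(3) unfolding admissible_def by blast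
  have rf: "H = Hperp V Ed s r (Hperp V Ed s r H)" using assms(4) unfolding reflexive_pair_def Let_def by (rule conjunct1)
  have Pp: "epath (quot_E V Ed s r H S) (quot_s s) (quot_r r) P"
    and Pc: "quot_s s (hd P) = quot_r r (last P)" and Pd: "distinct (map (quot_s s) P)"
    using cq unfolding cycle_def by auto
  have Pne: "P \<noteq> []" using Pp unfolding epath_def by auto
  have allInl: "\<exists>e. x = Inl e \<and> e \<in> Ed \<and> r e \<notin> H" if xP: "x \<in> set P" for x
  proof -
    obtain i where i0: "i < length P" "P ! i = x" using xP by (auto simp: in_set_conv_nth)
    hence i: "i < length P" "x = P ! i" by simp_all
    have "\<exists>u. quot_r r x = Inl u"
    proof (cases "Suc i < length P")
      case True
      hence "quot_r r x = quot_s s (P ! Suc i)" using Pp i unfolding epath_def by auto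
      thus ?thesis using qs_Inl_ex by metis
    next
      case False
      hence "i = length P - 1" using i by simp
      hence "x = last P" using i Pne by (simp add: last_conv_nth)
      thus ?thesis using Pc qs_Inl_ex by metis
    qed
    then obtain e where e: "x = Inl e" by (cases x) auto
    have "x \<in> quot_E V Ed s r H S" using xP Pp unfolding epath_def by auto
    thus ?thesis using e unfolding quot_E_def by auto
  qed
  then obtain p where pP: "P = map Inl p" using ex_map_conv[of P Inl] by metis
  have pprops: "\<forall>e\<in>set p. e \<in> Ed \<and> r e \<notin> H" using allInl pP by auto
  have pne: "p \<noteq> []" using Pne pP by auto
  have cp: "cycle Ed s r p" unfolding cycle_def epath_def
  proof (intro conjI allI impI)
    show "p \<noteq> []" by (rule pne)
    show "set p \<subseteq> Ed" using pprops by auto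
    fix i assume "Suc i < length p"
    thus "r (p ! i) = s (p ! Suc i)" using Pp pP unfolding epath_def by auto
  next
    show "s (hd p) = r (last p)" using Pc pP pne by (simp add: hd_map last_map)
    show "distinct (map s p)" using Pd pP by (simp add: distinct_map inj_on_def)
  qed
  then obtain f where f: "f \<in> Ed" "s f \<in> pverts s r p" "f \<notin> set p"
    using assms(2) cp unfolding condition_L_def has_exit_def by blast
  obtain g where g: "g \<in> Ed" "s g \<in> pverts s r p" "g \<notin> set p" "r g \<notin> H"
    using exit_outside_H[OF assms(1) her rf cp _ f] pprops by blast
  have "Inl g \<in> quot_E V Ed s r H S" using g unfolding quot_E_def by auto
  moreover have "quot_s s (Inl g) \<in> pverts (quot_s s) (quot_r r) P"
  proof -
    have "pverts (quot_s s) (quot_r r) P = Inl ` pverts s r p"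
      using pP unfolding pverts_def by (simp add: image_image image_Un)
    thus ?thesis using g(2) by simp
  qed
  moreover have "Inl g \<notin> set P" using g(3) pP by auto
  ultimately show "has_exit (quot_E V Ed s r H S) (quot_s s) (quot_r r) P"
    unfolding has_exit_def by blast
qed

end
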